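(* Almost every $n$-vertex graph is such that the multiset of its induced subgraphs with $3\log_2 n$ vertices is sufficient to determine it up to isomorphism. In other words, for almost every $n$-vertex graph $G$, the collection $\{(F, C_G(F))\}_{F\in\Gamma_{3\log_2 n}}$ determines $G$ up to isomorphism: if $G'$ is any $n$-vertex graph with $C_{G'}(F)=C_G(F)$ for every $F\in\Gamma_{3\log_2 n}$, then $G'\cong G$.
   Context: Graphs are finite, simple, undirected; all subgraphs are induced subgraphs. $\Gamma_m$ denotes the set of all (isomorphism types of) graphs on $m$ vertices. For graphs $F$ and $G$, the multiplicity $C_G(F)$ is the number of induced subgraphs of $G$ isomorphic to $F$. "Almost every $n$-vertex graph has property $Q$" means: in the random graph on $n$ labeled vertices where each edge is present independently with probability $1/2$, the probability that $G$ has $Q$ tends to $1$ as $n\to\infty$. *)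

theory Defs
  imports Complex_Main
begin

(* A labelled simple graph on vertex set {0..<n} is a set of 2-element subsets of {0..<n}. *)
definition all_pairs :: "nat \<Rightarrow> nat set set" where
  "all_pairs n = {e. e \<subseteq> {0..<n} \<and> card e = 2}"

(* All labelled graphs on {0..<n}; the G(n,1/2) random graph is uniform on this set. *)
definition labeled_graphs :: "nat \<Rightarrow> nat set set set" where
  "labeled_graphs n = Pow (all_pairs n)"

definition graph_iso :: "'a set \<Rightarrow> 'a set set \<Rightarrow> 'b set \<Rightarrow> 'b set set \<Rightarrow> bool" where
  "graph_iso V E W F \<longleftrightarrow>
     (\<exists>f. bij_betw f V W \<and> (\<forall>u\<in>V. \<forall>v\<in>V. ({u, v} \<in> E \<longleftrightarrow> {f u, f v} \<in> F)))"

definition induced :: "'a set set \<Rightarrow> 'a set \<Rightarrow> 'a set set" where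
  "induced E S = {e \<in> E. e \<subseteq> S}"

definition ind_count :: "nat \<Rightarrow> nat set set \<Rightarrow> nat \<Rightarrow> nat set set \<Rightarrow> nat" where
  "ind_count n E m EF =
     card {S. S \<subseteq> {0..<n} \<and> card S = m \<and> graph_iso S (induced E S) {0..<m} EF}"

definition determined_by_deck :: "nat \<Rightarrow> nat \<Rightarrow> nat set set \<Rightarrow> bool" where
  "determined_by_deck n m E \<longleftrightarrow>
     (\<forall>E' \<in> labeled_graphs n.
        (\<forall>EF \<in> labeled_graphs m. ind_count n E' m EF = ind_count n E m EF)
        \<longrightarrow> graph_iso {0..<n} E {0..<n} E')"

end

theory Submission
  imports Defs "HOL-Library.FuncSet" "HOL-Real_Asymp.Real_Asymp"
begin

lemma count_det:
  fixes U :: "'a set" and f :: "'a \<Rightarrow> nat"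
  assumes U: "finite U" and QU: "Q \<subseteq> U" and SU: "S \<subseteq> Pow U"
    and det: "\<And>q. q \<in> Q \<Longrightarrow> \<exists>z. f z < f q \<and> (\<forall>E\<in>S. q \<in> E \<longleftrightarrow> z \<in> E)"
  shows "card S \<le> 2 ^ (card U - card Q)"
proof -
  have inj: "inj_on (\<lambda>E. E - Q) S"
  proof (rule inj_onI)
    fix E1 E2 assume E1: "E1 \<in> S" and E2: "E2 \<in> S" and eq: "E1 - Q = E2 - Q"
    have "\<forall>q. f q < N \<longrightarrow> (q \<in> E1 \<longleftrightarrow> q \<in> E2)" for N
    proof (induction N)
      case 0 then show ?case by simp
    next
      case (Suc N)
      show ?case
      proof (intro allI impI)
        fix q assume "f q < Suc N"
        show "q \<in> E1 \<longleftrightarrow> q \<in> E2"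
        proof (cases "q \<in> Q")
          case True
          then obtain z where "f z < f q" and o: "\<forall>E\<in>S. q \<in> E \<longleftrightarrow> z \<in> E" using det by blast
          then have "f z < N" using \<open>f q < Suc N\<close> by simp
          then show ?thesis using Suc.IH o E1 E2 by blast
        next
          case False then show ?thesis using eq by blast
        qed
      qed
    qed
    then show "E1 = E2" by (meson lessI subsetI subset_antisym)
  qed
  have "(\<lambda>E. E - Q) ` S \<subseteq> Pow (U - Q)" using SU by blast
  then have "card ((\<lambda>E. E - Q) ` S) \<le> card (Pow (U - Q))"
    by (intro card_mono) (use U in auto)
  also have "\<dots> = 2 ^ card (U - Q)" using U by (simp add: card_Pow)
  also have "card (U - Q) = card U - card Q" using U QU by (simp add: card_Diff_subset finite_subset)
  finally show ?thesis using card_image[OF inj] by simp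
qed

lemma double_count:
  fixes P :: "'a set set"
  assumes P: "finite P" and M: "finite M" and P2: "\<And>p. p \<in> P \<Longrightarrow> card p = 2"
    and c: "\<And>x. x \<in> M \<Longrightarrow> c \<le> card {p\<in>P. x \<in> p}"
  shows "card M * c \<le> 2 * card P"
proof -
  have "card M * c = (\<Sum>x\<in>M. c)" by simp
  also have "\<dots> \<le> (\<Sum>x\<in>M. card {p\<in>P. x \<in> p})" by (rule sum_mono) (use c in auto)
  also have "\<dots> = (\<Sum>x\<in>M. \<Sum>p\<in>P. if x \<in> p then 1 else 0)"
    using P by (intro sum.cong refl) (simp add: sum.inter_filter[symmetric])
  also have "\<dots> = (\<Sum>p\<in>P. \<Sum>x\<in>M. if x \<in> p then 1 else 0)" by (rule sum.swap)
  also have "\<dots> = (\<Sum>p\<in>P. card (M \<inter> p))"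
    using M by (intro sum.cong refl) (simp add: sum.inter_filter[symmetric] Int_def conj_commute)
  also have "\<dots> \<le> (\<Sum>p\<in>P. 2)"
    by (rule sum_mono) (metis P2 card_mono Int_lower2 card.infinite zero_le nat.simps(3) numeral_2_eq_2 order.trans le_refl card_ge_0_finite[of p] )
  finally show ?thesis by simp
qed

definition iso_on :: "nat set set \<Rightarrow> nat set \<Rightarrow> nat set set \<Rightarrow> nat set \<Rightarrow> (nat \<Rightarrow> nat) \<Rightarrow> bool" where
  "iso_on E S E' S' f \<longleftrightarrow> bij_betw f S S' \<and> (\<forall>u\<in>S. \<forall>v\<in>S. {u, v} \<in> E \<longleftrightarrow> {f u, f v} \<in> E')"

lemma iso_inv:
  assumes "iso_on E S E' S' f" shows "iso_on E' S' E S (inv_into S f)"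
proof -
  have b: "bij_betw f S S'" using assms iso_on_def by blast
  have "{inv_into S f u, inv_into S f v} \<in> E \<longleftrightarrow> {u, v} \<in> E'" if "u \<in> S'" "v \<in> S'" for u v
  proof -
    have "inv_into S f u \<in> S" "inv_into S f v \<in> S"
      using b that by (metis bij_betw_imp_surj_on inv_into_into)+
    then show ?thesis using assms unfolding iso_on_def
      by (metis b bij_betw_inv_into_right that)
  qed
  then show ?thesis unfolding iso_on_def using bij_betw_inv_into[OF b] by blast
qed

lemma iso_comp:
  assumes "iso_on E S E' S' f" "iso_on E' S' E'' S'' g" shows "iso_on E S E'' S'' (g \<circ> f)"
proof -
  have "bij_betw (g \<circ> f) S S''" using assms unfolding iso_on_def by (auto intro: bij_betw_trans)
  moreover have "{u, v} \<in> E \<longleftrightarrow> {g (f u), g (f v)} \<in> E''" if "u \<in> S" "v \<in> S" for u v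
  proof -
    have "f u \<in> S'" "f v \<in> S'" using assms that unfolding iso_on_def by (auto dest: bij_betw_apply)
    then show ?thesis using assms that unfolding iso_on_def by auto
  qed
  ultimately show ?thesis unfolding iso_on_def by auto
qed

lemma iso_id: "iso_on E S E S id"
  unfolding iso_on_def by simp

lemma iso_restrict:
  assumes "iso_on E S E' S' f" "A \<subseteq> S" shows "iso_on E A E' (f ` A) f"
  using assms unfolding iso_on_def by (auto intro: bij_betw_subset)

lemma iso_cong:
  assumes "iso_on E S E' S' f" "\<And>x. x \<in> S \<Longrightarrow> g x = f x" shows "iso_on E S E' S' g"
proof -
  have "bij_betw g S S'" using assms bij_betw_cong unfolding iso_on_def by metis
  then show ?thesis using assms unfolding iso_on_def by auto
qed

definition copies :: "nat \<Rightarrow> nat set set \<Rightarrow> nat set set \<Rightarrow> nat set \<Rightarrow> nat set set" where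
  "copies n E2 E S = {T. T \<subseteq> {0..<n} \<and> card T = card S \<and> (\<exists>f. iso_on E2 T E S f)}"

lemma finite_copies: "finite (copies n E2 E S)"
  by (rule finite_subset[of _ "Pow {0..<n}"]) (auto simp: copies_def)

lemma graph_iso_induced:
  assumes "EF \<subseteq> Pow {0..<m}"
  shows "graph_iso T (induced E2 T) {0..<m} EF \<longleftrightarrow> (\<exists>h. iso_on E2 T EF {0..<m} h)"
  unfolding graph_iso_def iso_on_def induced_def by auto

lemma deck_rep:
  assumes E: "E \<subseteq> all_pairs n" and S: "finite S" "card S = m"
  shows "\<exists>EF\<in>labeled_graphs m. \<forall>E2. ind_count n E2 m EF = card (copies n E2 E S)"
proof -
  obtain g where g: "bij_betw g S {0..<m}" using ex_bij_betw_finite_nat[OF S(1)] S(2) by auto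
  have ig: "inj_on g S" using g bij_betw_def by blast
  define EF where "EF = (\<lambda>e. g ` e) ` induced E S"
  have EFsub: "EF \<subseteq> all_pairs m"
  proof
    fix e' assume "e' \<in> EF"
    then obtain e where e: "e \<in> E" "e \<subseteq> S" and e': "e' = g ` e" unfolding EF_def induced_def by auto
    have "card e = 2" using e E all_pairs_def by auto
    then have "card e' = 2" using e' card_image inj_on_subset[OF ig e(2)] by metis
    moreover have "e' \<subseteq> {0..<m}" using e' e(2) g bij_betw_imp_surj_on by blast
    ultimately show "e' \<in> all_pairs m" unfolding all_pairs_def by auto
  qed
  have giso: "iso_on E S EF {0..<m} g"
  proof -
    have "{u, v} \<in> E \<longleftrightarrow> {g u, g v} \<in> EF" if "u \<in> S" "v \<in> S" for u v
    proof
      assume "{u, v} \<in> E" then show "{g u, g v} \<in> EF"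
        unfolding EF_def induced_def using that by (intro image_eqI[of _ _ "{u,v}"]) auto
    next
      assume "{g u, g v} \<in> EF"
      then obtain e where e: "e \<in> E" "e \<subseteq> S" and ee: "g ` e = {g u, g v}" unfolding EF_def induced_def by auto
      have "g ` e = g ` {u, v}" using ee by simp
      moreover have "{u, v} \<subseteq> S" using that by auto
      ultimately have "e = {u, v}" using inj_on_image_eq_iff[OF ig e(2)] by blast
      then show "{u, v} \<in> E" using e by simp
    qed
    then show ?thesis unfolding iso_on_def using g by blast
  qed
  have EFP: "EF \<subseteq> Pow {0..<m}" using EFsub unfolding all_pairs_def by auto
  have key: "graph_iso T (induced E2 T) {0..<m} EF \<longleftrightarrow> (\<exists>h. iso_on E2 T E S h)" for T E2
  proof -
    have "(\<exists>h. iso_on E2 T EF {0..<m} h) \<longleftrightarrow> (\<exists>h. iso_on E2 T E S h)"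
    proof
      assume "\<exists>h. iso_on E2 T EF {0..<m} h"
      then obtain h where "iso_on E2 T EF {0..<m} h" by blast
      then show "\<exists>h. iso_on E2 T E S h" using iso_comp iso_inv[OF giso] by blast
    next
      assume "\<exists>h. iso_on E2 T E S h"
      then obtain h where "iso_on E2 T E S h" by blast
      then show "\<exists>h. iso_on E2 T EF {0..<m} h" using iso_comp giso by blast
    qed
    then show ?thesis using graph_iso_induced[OF EFP] by simp
  qed
  have "ind_count n E2 m EF = card (copies n E2 E S)" for E2
    unfolding ind_count_def copies_def using key S(2) by simp
  moreover have "EF \<in> labeled_graphs m" using EFsub labeled_graphs_def by simp
  ultimately show ?thesis by blast
qed

lemma deck_eq:
  assumes deck: "\<forall>EF\<in>labeled_graphs m. ind_count n E' m EF = ind_count n E m EF"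
    and E1: "E1 \<subseteq> all_pairs n" and S: "finite S" "card S = m"
  shows "card (copies n E' E1 S) = card (copies n E E1 S)"
  using deck_rep[OF E1 S] deck by metis

lemma iso_img: "iso_on E S E' S' f \<Longrightarrow> f ` S = S'"
  unfolding iso_on_def by (metis bij_betw_imp_surj_on)

lemma iso_bij: "iso_on E S E' S' f \<Longrightarrow> bij_betw f S S'"
  unfolding iso_on_def by blast

lemma iso_edge: "iso_on E S E' S' f \<Longrightarrow> u \<in> S \<Longrightarrow> v \<in> S \<Longrightarrow> {u, v} \<in> E \<longleftrightarrow> {f u, f v} \<in> E'"
  unfolding iso_on_def by blast

locale det =
  fixes n k :: nat and E E' :: "nat set set"
  assumes E: "E \<subseteq> all_pairs n" and E': "E' \<subseteq> all_pairs n"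
  and kn: "k + 2 \<le> n"
  and rigid: "\<And>\<sigma> x. (\<forall>x\<in>{0..<k}. \<sigma> x \<in> {0..<n}) \<Longrightarrow> inj_on \<sigma> {0..<k} \<Longrightarrow>
       (\<forall>x\<in>{0..<k}. \<forall>y\<in>{0..<k}. {x, y} \<in> E \<longleftrightarrow> {\<sigma> x, \<sigma> y} \<in> E) \<Longrightarrow> x \<in> {0..<k} \<Longrightarrow> \<sigma> x = x"
  and dist: "\<And>u v. u \<in> {k..<n} \<Longrightarrow> v \<in> {k..<n} \<Longrightarrow> u \<noteq> v \<Longrightarrow> \<exists>b<k. ({u, b} \<in> E) \<noteq> ({v, b} \<in> E)"
  and deck: "\<forall>EF\<in>labeled_graphs (k+2). ind_count n E' (k+2) EF = ind_count n E (k+2) EF"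
begin

abbreviation "V \<equiv> {0..<n}"
abbreviation "BB \<equiv> {0..<k}"
abbreviation "W \<equiv> {k..<n}"

definition "pairs = {p. p \<subseteq> W \<and> card p = 2}"
definition "SS p = BB \<union> p"

lemma rigid_iso:
  assumes "iso_on E BB E T h" "T \<subseteq> V" "x \<in> BB" shows "h x = x"
proof -
  have "bij_betw h BB T" using assms iso_on_def by blast
  then have "inj_on h BB" by (rule bij_betw_imp_inj_on)
  have "\<forall>x\<in>BB. h x \<in> V" using assms(2) bij_betw_apply[OF \<open>bij_betw h BB T\<close>] by (auto simp: subset_iff)
  then show ?thesis using rigid[of h x] assms \<open>inj_on h BB\<close> unfolding iso_on_def by blast
qed

lemma pairsD: assumes "p \<in> pairs" shows "p \<subseteq> W" "card p = 2" "finite p" "SS p \<subseteq> V" "card (SS p) = k + 2"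
  "finite (SS p)" "BB \<inter> p = {}" "SS p - BB = p"
proof -
  show "p \<subseteq> W" "card p = 2" using assms pairs_def by auto
  then show fp: "finite p" by (metis card.infinite zero_neq_numeral)
  show "SS p \<subseteq> V" using \<open>p \<subseteq> W\<close> SS_def kn by auto
  show d: "BB \<inter> p = {}" using \<open>p \<subseteq> W\<close> by auto
  have "card (BB \<union> p) = card BB + card p" by (rule card_Un_disjoint) (use fp d in auto)
  then show "card (SS p) = k + 2" unfolding SS_def using \<open>card p = 2\<close> by simp
  show "finite (SS p)" using fp SS_def by simp
  show "SS p - BB = p" using d SS_def by auto
qed

lemma fix_S:
  assumes p: "p \<in> pairs" and g: "iso_on E (SS p) E T g" and T: "T \<subseteq> V" and x: "x \<in> SS p"
  shows "g x = x"
proof -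
  have gb: "bij_betw g (SS p) T" using g iso_on_def by blast
  have ginj: "inj_on g (SS p)" using gb bij_betw_def by blast
  have gB: "g y = y" if "y \<in> BB" for y
  proof -
    have BS: "BB \<subseteq> SS p" unfolding SS_def by blast
    have "iso_on E BB E (g ` BB) g" by (rule iso_restrict[OF g BS])
    moreover have "g ` BB \<subseteq> V" using image_mono[OF BS, of g] bij_betw_imp_surj_on[OF gb] T by blast
    ultimately show ?thesis using rigid_iso that by blast
  qed
  show ?thesis
  proof (cases "x \<in> BB")
    case True then show ?thesis using gB by blast
  next
    case False
    then have xp: "x \<in> p" using x unfolding SS_def by blast
    then have xW: "x \<in> W" using pairsD(1)[OF p] by blast
    have gxV: "g x \<in> V" using bij_betw_apply[OF gb x] T by blast
    have gxB: "g x \<notin> BB"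
    proof
      assume "g x \<in> BB"
      then have "g (g x) = g x" using gB by blast
      moreover have "g x \<in> SS p" using \<open>g x \<in> BB\<close> unfolding SS_def by blast
      ultimately have "g x = x" using inj_onD[OF ginj] x by metis
      then show False using \<open>g x \<in> BB\<close> False by simp
    qed
    show ?thesis
    proof (rule ccontr)
      assume ne: "g x \<noteq> x"
      have "g x \<in> W" using gxV gxB by auto
      then obtain b where b: "b < k" "({g x, b} \<in> E) \<noteq> ({x, b} \<in> E)" using dist[OF \<open>g x \<in> W\<close> xW ne] by blast
      have bS: "b \<in> SS p" using b unfolding SS_def by simp
      have "{x, b} \<in> E \<longleftrightarrow> {g x, g b} \<in> E" using g x bS unfolding iso_on_def by blast
      moreover have "g b = b" using gB b by simp
      ultimately show False using b by simp
    qed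
  qed
qed

lemma copies_E: assumes p: "p \<in> pairs" shows "copies n E E (SS p) = {SS p}"
proof
  have "SS p \<subseteq> V" "iso_on E (SS p) E (SS p) id" using pairsD(4)[OF p] iso_id by auto
  then show "{SS p} \<subseteq> copies n E E (SS p)" unfolding copies_def by blast
  show "copies n E E (SS p) \<subseteq> {SS p}"
  proof
    fix T assume "T \<in> copies n E E (SS p)"
    then obtain f where T: "T \<subseteq> V" and f: "iso_on E T E (SS p) f" unfolding copies_def by blast
    define g where "g = inv_into T f"
    have g: "iso_on E (SS p) E T g" using iso_inv[OF f] g_def by simp
    have "g ` SS p = T" using g unfolding iso_on_def by (simp add: bij_betw_imp_surj_on)
    moreover have "g ` SS p = SS p" using fix_S[OF p g T] by simp
    ultimately show "T \<in> {SS p}" by simp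
  qed
qed

lemma card_copies_E': assumes p: "p \<in> pairs" shows "card (copies n E' E (SS p)) = 1"
  using deck_eq[OF deck E pairsD(6,5)[OF p]] copies_E[OF p] by simp

definition "SS' p = (THE T. T \<in> copies n E' E (SS p))"

lemma copies_E'_eq: assumes p: "p \<in> pairs" shows "copies n E' E (SS p) = {SS' p}"
proof -
  obtain T where "copies n E' E (SS p) = {T}" using card_copies_E'[OF p] card_1_singletonE by blast
  then show ?thesis unfolding SS'_def by simp
qed

definition "phi p = (SOME f. iso_on E' (SS' p) E (SS p) f)"
definition "psi p = inv_into (SS' p) (phi p)"

lemma SS'_props: assumes p: "p \<in> pairs"
  shows "SS' p \<subseteq> V" "card (SS' p) = k + 2" "iso_on E' (SS' p) E (SS p) (phi p)"
    "iso_on E (SS p) E' (SS' p) (psi p)"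
proof -
  have "SS' p \<in> copies n E' E (SS p)" using copies_E'_eq[OF p] by simp
  then have *: "SS' p \<subseteq> V" "card (SS' p) = card (SS p)" "\<exists>f. iso_on E' (SS' p) E (SS p) f"
    unfolding copies_def by auto
  show "SS' p \<subseteq> V" using * by simp
  show "card (SS' p) = k + 2" using * pairsD[OF p] by simp
  show i: "iso_on E' (SS' p) E (SS p) (phi p)" using *(3) unfolding phi_def by (rule someI_ex)
  show "iso_on E (SS p) E' (SS' p) (psi p)" using iso_inv[OF i] psi_def by simp
qed

lemma step5:
  assumes T': "T' \<subseteq> V" "card T' = k + 2" and h: "iso_on E BB E' (h ` BB) h" and hT: "h ` BB \<subseteq> T'"
  shows "\<exists>p\<in>pairs. T' = SS' p"
proof -
  have fT': "finite T'" using T'(1) finite_subset by blast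
  have "T' \<in> copies n E' E' T'" using T'(1) iso_id unfolding copies_def by blast
  then have "card (copies n E' E' T') > 0" using finite_copies card_gt_0_iff by blast
  then have "card (copies n E E' T') > 0" using deck_eq[OF deck E' fT' T'(2)] by simp
  then have "copies n E E' T' \<noteq> {}" by (metis card.empty less_irrefl)
  then obtain T where "T \<in> copies n E E' T'" by blast
  then have "T \<subseteq> V \<and> card T = card T' \<and> (\<exists>f. iso_on E T E' T' f)" unfolding copies_def by simp
  then obtain g where T: "T \<subseteq> V" "card T = k + 2" and g: "iso_on E T E' T' g"
    using T'(2) by metis
  define g' where "g' = inv_into T g"
  have g': "iso_on E' T' E T g'" using iso_inv[OF g] g'_def by simp
  have g'img: "g' ` T' = T" using g' unfolding iso_on_def by (simp add: bij_betw_imp_surj_on)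
  have "iso_on E' (h ` BB) E (g' ` h ` BB) g'" using iso_restrict[OF g' hT] .
  then have c: "iso_on E BB E (g' ` h ` BB) (g' \<circ> h)" using iso_comp[OF h] by (simp add: image_comp)
  have ghT: "g' ` h ` BB \<subseteq> T" using image_mono[OF hT, of g'] g'img by simp
  then have ghV: "(g' \<circ> h) ` BB \<subseteq> V" using T(1) by (simp add: image_comp)
  have fixx: "g' (h x) = x" if "x \<in> BB" for x
    using rigid_iso[OF c, of x] ghT T(1) that by (simp add: image_comp)
  have BT: "BB \<subseteq> T"
  proof
    fix x assume x: "x \<in> BB"
    then have "g' (h x) \<in> T" using ghT by blast
    then show "x \<in> T" using fixx[OF x] by simp
  qed
  define p where "p = T - BB"
  have fT: "finite T" using T(1) finite_subset by blast
  have "card p = 2" unfolding p_def using card_Diff_subset[OF _ BT] T(2) by simp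
  moreover have "p \<subseteq> W"
  proof
    fix x assume "x \<in> p"
    then have "x \<in> T" "x \<notin> BB" unfolding p_def by simp_all
    then show "x \<in> W" using T(1) by fastforce
  qed
  ultimately have pp: "p \<in> pairs" unfolding pairs_def by blast
  have Sp: "SS p = T" unfolding SS_def p_def using BT by blast
  have "card T' = card (SS p)" using Sp T(2) T'(2) by simp
  then have "T' \<in> copies n E' E (SS p)" unfolding copies_def mem_Collect_eq using T'(1) g' Sp by metis
  then show ?thesis using copies_E'_eq[OF pp] pp by blast
qed

definition "p0 = {k, Suc k}"
definition "B' = psi p0 ` BB"
definition "psi0 = psi p0"

lemma p0: "p0 \<in> pairs" unfolding pairs_def p0_def using kn by auto

lemma psi0_iso: "iso_on E BB E' B' psi0"
  unfolding B'_def psi0_def by (rule iso_restrict[OF SS'_props(4)[OF p0]]) (simp add: SS_def)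

lemma B'_props: "B' \<subseteq> V" "card B' = k" "finite B'"
proof -
  have b: "bij_betw psi0 BB B'" using psi0_iso iso_on_def by blast
  have "B' \<subseteq> SS' p0" unfolding B'_def SS_def using SS'_props(4)[OF p0] unfolding iso_on_def
    by (metis Un_upper1 bij_betw_imp_surj_on image_mono SS_def)
  then show "B' \<subseteq> V" using SS'_props(1)[OF p0] by blast
  show "card B' = k" using bij_betw_same_card[OF b] by simp
  then show "finite B'" using \<open>B' \<subseteq> V\<close> finite_subset by blast
qed

lemma SS'_inj: assumes p: "p \<in> pairs" and q: "q \<in> pairs" and eq: "SS' p = SS' q" shows "p = q"
proof -
  have i: "iso_on E (SS p) E (SS q) (phi q \<circ> psi p)"
    using iso_comp[OF SS'_props(4)[OF p]] SS'_props(3)[OF q] eq by simp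
  have "(phi q \<circ> psi p) ` SS p = SS q" using iso_img[OF i] .
  moreover have "(phi q \<circ> psi p) ` SS p = SS p" using fix_S[OF p i pairsD(4)[OF q]] by simp
  ultimately have "SS p = SS q" by simp
  then show ?thesis using pairsD(8)[OF p] pairsD(8)[OF q] by metis
qed

definition "DD = {T'. T' \<subseteq> V \<and> card T' = k + 2 \<and> B' \<subseteq> T'}"

lemma card_pairs: "card pairs = (n - k) choose 2"
  unfolding pairs_def using n_subsets[of W 2] by simp

lemma card_DD: "card DD = (n - k) choose 2"
proof -
  have "bij_betw (\<lambda>T. T - B') DD {P. P \<subseteq> V - B' \<and> card P = 2}"
  proof (rule bij_betw_byWitness[where f' = "\<lambda>P. B' \<union> P"])
    show "\<forall>a\<in>DD. B' \<union> (a - B') = a" unfolding DD_def by blast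
    show "\<forall>a'\<in>{P. P \<subseteq> V - B' \<and> card P = 2}. B' \<union> a' - B' = a'" by blast
    show "(\<lambda>T. T - B') ` DD \<subseteq> {P. P \<subseteq> V - B' \<and> card P = 2}"
    proof
      fix P assume "P \<in> (\<lambda>T. T - B') ` DD"
      then obtain T where T: "T \<subseteq> V" "card T = k + 2" "B' \<subseteq> T" and P: "P = T - B'" unfolding DD_def by blast
      have "finite T" using T(1) finite_subset by blast
      then have "card P = 2" using P card_Diff_subset[OF B'_props(3) T(3)] T(2) B'_props(2) by simp
      then show "P \<in> {P. P \<subseteq> V - B' \<and> card P = 2}" using P T by blast
    qed
    show "(\<lambda>P. B' \<union> P) ` {P. P \<subseteq> V - B' \<and> card P = 2} \<subseteq> DD"
    proof
      fix T assume "T \<in> (\<lambda>P. B' \<union> P) ` {P. P \<subseteq> V - B' \<and> card P = 2}"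
      then obtain P where P: "P \<subseteq> V - B'" "card P = 2" and T: "T = B' \<union> P" by blast
      have fP: "finite P" using P(2) by (metis card.infinite zero_neq_numeral)
      have "card T = card B' + card P" unfolding T by (rule card_Un_disjoint) (use fP B'_props(3) P(1) in auto)
      then show "T \<in> DD" unfolding DD_def using T P B'_props by auto
    qed
  qed
  then have "card DD = card {P. P \<subseteq> V - B' \<and> card P = 2}" by (rule bij_betw_same_card)
  also have "\<dots> = card (V - B') choose 2" by (rule n_subsets) simp
  also have "card (V - B') = n - k" using card_Diff_subset[OF B'_props(3,1)] B'_props(2) by simp
  finally show ?thesis .
qed

lemma finite_pairs: "finite pairs" unfolding pairs_def by (rule finite_subset[of _ "Pow W"]) auto

lemma DD_eq: "SS' ` pairs = DD"
proof -
  have sub: "DD \<subseteq> SS' ` pairs"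
  proof
    fix T' assume "T' \<in> DD"
    then have T': "T' \<subseteq> V" "card T' = k + 2" "B' \<subseteq> T'" unfolding DD_def by auto
    have "iso_on E BB E' (psi0 ` BB) psi0" using psi0_iso B'_def psi0_def by simp
    moreover have "psi0 ` BB \<subseteq> T'" using T'(3) B'_def psi0_def by simp
    ultimately show "T' \<in> SS' ` pairs" using step5[OF T'(1,2)] by blast
  qed
  have "inj_on SS' pairs"
  proof (rule inj_onI)
    fix p q assume "p \<in> pairs" "q \<in> pairs" "SS' p = SS' q"
    then show "p = q" by (rule SS'_inj)
  qed
  then have "card (SS' ` pairs) = card pairs" by (rule card_image)
  then have "card (SS' ` pairs) = card DD" using card_pairs card_DD by simp
  then show ?thesis using card_subset_eq[OF finite_imageI[OF finite_pairs] sub] by simp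
qed

lemma B'_sub: assumes p: "p \<in> pairs" shows "B' \<subseteq> SS' p"
proof -
  have "SS' p \<in> DD" using DD_eq p by blast
  then show ?thesis unfolding DD_def by blast
qed

lemma psi_B: assumes p: "p \<in> pairs" and x: "x \<in> BB" shows "psi p x = psi0 x"
proof -
  have r: "iso_on E' B' E (phi p ` B') (phi p)" by (rule iso_restrict[OF SS'_props(3)[OF p] B'_sub[OF p]])
  have c: "iso_on E BB E (phi p ` B') (phi p \<circ> psi0)" using iso_comp[OF psi0_iso r] .
  have "phi p ` B' \<subseteq> SS p" using image_mono[OF B'_sub[OF p], of "phi p"] iso_img[OF SS'_props(3)[OF p]] by simp
  then have "phi p ` B' \<subseteq> V" using pairsD(4)[OF p] by blast
  then have e: "phi p (psi0 x) = x" using rigid_iso[OF c _ x] by simp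
  have "psi p0 x \<in> B'" unfolding B'_def by (rule imageI[OF x])
  then have "psi0 x \<in> SS' p" using B'_sub[OF p] unfolding psi0_def by blast
  then have "inv_into (SS' p) (phi p) (phi p (psi0 x)) = psi0 x"
    by (rule bij_betw_inv_into_left[OF iso_bij[OF SS'_props(3)[OF p]]])
  then show ?thesis unfolding psi_def using e by simp
qed

lemma psi_out: assumes p: "p \<in> pairs" and u: "u \<in> p" shows "psi p u \<in> V - B'"
proof -
  have i: "iso_on E (SS p) E' (SS' p) (psi p)" using SS'_props(4)[OF p] .
  have uS: "u \<in> SS p" using u unfolding SS_def by blast
  have "psi p u \<in> SS' p" using iso_img[OF i] uS by blast
  then have "psi p u \<in> V" using SS'_props(1)[OF p] by blast
  moreover have "psi p u \<notin> B'"
  proof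
    assume "psi p u \<in> B'"
    then obtain b where b: "b \<in> BB" "psi p u = psi0 b" unfolding B'_def psi0_def by blast
    then have e: "psi p u = psi p b" using psi_B[OF p b(1)] by simp
    have bS: "b \<in> SS p" using b(1) unfolding SS_def by blast
    have "u = b" by (rule inj_onD[OF bij_betw_imp_inj_on[OF iso_bij[OF i]] e uS bS])
    then show False using b(1) u pairsD(7)[OF p] by blast
  qed
  ultimately show ?thesis by blast
qed

definition "X u = {b\<in>BB. {b, u} \<in> E}"
definition "X' w = {b\<in>BB. {psi0 b, w} \<in> E'}"

lemma XX: assumes p: "p \<in> pairs" and u: "u \<in> p" shows "X' (psi p u) = X u"
proof -
  have i: "iso_on E (SS p) E' (SS' p) (psi p)" using SS'_props(4)[OF p] .
  have uS: "u \<in> SS p" using u unfolding SS_def by blast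
  have "{b, u} \<in> E \<longleftrightarrow> {psi0 b, psi p u} \<in> E'" if b: "b \<in> BB" for b
  proof -
    have "b \<in> SS p" using b unfolding SS_def by blast
    then have "{b, u} \<in> E \<longleftrightarrow> {psi p b, psi p u} \<in> E'" using iso_edge[OF i _ uS] by blast
    then show ?thesis using psi_B[OF p b] by simp
  qed
  then show ?thesis unfolding X_def X'_def by blast
qed

lemma X_inj: assumes "u \<in> W" "v \<in> W" "u \<noteq> v" shows "X u \<noteq> X v"
proof -
  obtain b where b: "b < k" "({u, b} \<in> E) \<noteq> ({v, b} \<in> E)" using dist[OF assms] by blast
  have "{u, b} = {b, u}" "{v, b} = {b, v}" by auto
  then have "(b \<in> X u) \<noteq> (b \<in> X v)" using b unfolding X_def by simp
  then show ?thesis by blast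
qed

lemma X'_inj: assumes w1: "w1 \<in> V - B'" and w2: "w2 \<in> V - B'" and ne: "w1 \<noteq> w2"
  shows "X' w1 \<noteq> X' w2"
proof -
  define T' where "T' = B' \<union> {w1, w2}"
  have "card T' = card B' + card {w1, w2}" unfolding T'_def
    by (rule card_Un_disjoint) (use B'_props(3) w1 w2 in auto)
  then have cT: "card T' = k + 2" using ne B'_props(2) by simp
  have TV: "T' \<subseteq> V" unfolding T'_def using B'_props(1) w1 w2 by blast
  have BT: "B' \<subseteq> T'" unfolding T'_def by (rule Un_upper1)
  have "T' \<in> DD" unfolding DD_def mem_Collect_eq using TV cT BT by blast
  then obtain p where p: "p \<in> pairs" and T'p: "T' = SS' p" using DD_eq by blast
  have i: "iso_on E (SS p) E' (SS' p) (psi p)" using SS'_props(4)[OF p] .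
  have wT: "{w1, w2} \<subseteq> T'" unfolding T'_def by (rule Un_upper2)
  have pre: "\<exists>u\<in>p. psi p u = w" if w: "w \<in> {w1, w2}" for w
  proof -
    have "w \<in> SS' p" using w wT T'p by blast
    then have "w \<in> psi p ` SS p" using iso_img[OF i] by simp
    then obtain x where x: "x \<in> SS p" "w = psi p x" by (rule imageE)
    have "x \<notin> BB"
    proof
      assume xB: "x \<in> BB"
      have "w = psi p0 x" using x(2) psi_B[OF p xB] unfolding psi0_def by simp
      then have "w \<in> B'" unfolding B'_def using xB by (rule image_eqI)
      then show False using w w1 w2 by blast
    qed
    then have "x \<in> p" using x(1) unfolding SS_def by blast
    then show ?thesis using x(2) by blast
  qed
  obtain u where u: "u \<in> p" "psi p u = w1" using pre by blast
  obtain v where v: "v \<in> p" "psi p v = w2" using pre by blast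
  have "u \<noteq> v" using u v ne by blast
  moreover have "u \<in> W" "v \<in> W" using u(1) v(1) pairsD(1)[OF p] by blast+
  ultimately have "X u \<noteq> X v" by (rule X_inj[rotated 2])
  then show ?thesis using XX[OF p u(1)] XX[OF p v(1)] u(2) v(2) by simp
qed

definition "ff x = (if x \<in> BB then psi0 x else (THE w. w \<in> V - B' \<and> X' w = X x))"

lemma ff_eq: assumes p: "p \<in> pairs" and x: "x \<in> SS p" shows "ff x = psi p x"
proof (cases "x \<in> BB")
  case True then show ?thesis using psi_B[OF p True] unfolding ff_def by simp
next
  case False
  then have xp: "x \<in> p" using x unfolding SS_def by blast
  have "(THE w. w \<in> V - B' \<and> X' w = X x) = psi p x"
  proof (rule the_equality)
    show "psi p x \<in> V - B' \<and> X' (psi p x) = X x" using psi_out[OF p xp] XX[OF p xp] by blast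
    fix w assume w: "w \<in> V - B' \<and> X' w = X x"
    show "w = psi p x"
    proof (rule ccontr)
      assume ne: "w \<noteq> psi p x"
      have "X' w \<noteq> X' (psi p x)" using X'_inj[OF _ psi_out[OF p xp] ne] w by blast
      then show False using w XX[OF p xp] by simp
    qed
  qed
  then show ?thesis using False unfolding ff_def by simp
qed

lemma cover: assumes x: "x \<in> V" and y: "y \<in> V" shows "\<exists>p\<in>pairs. x \<in> SS p \<and> y \<in> SS p"
proof -
  define Z where "Z = {x, y} \<inter> W"
  have "card Z \<le> card {x, y}" unfolding Z_def by (rule card_mono) auto
  also have "\<dots> \<le> 2" by (simp add: card_insert_le_m1)
  finally have cZ: "card Z \<le> 2" .
  have "card W = n - k" by simp
  then have cW: "2 \<le> card W" using kn by simp
  obtain p where p: "Z \<subseteq> p" "p \<subseteq> W" "card p = 2"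
    using exists_subset_between[OF cZ cW _ finite_atLeastLessThan] Z_def by blast
  have pp: "p \<in> pairs" unfolding pairs_def using p by blast
  have "z \<in> SS p" if "z \<in> {x, y}" for z
  proof (cases "z < k")
    case True then show ?thesis unfolding SS_def by simp
  next
    case False
    then have "z \<in> Z" unfolding Z_def using that x y by auto
    then show ?thesis using p(1) unfolding SS_def by blast
  qed
  then show ?thesis using pp by blast
qed

theorem iso_result: "graph_iso V E V E'"
proof -
  have inj: "inj_on ff V"
  proof (rule inj_onI)
    fix x y assume x: "x \<in> V" and y: "y \<in> V" and eq: "ff x = ff y"
    obtain p where p: "p \<in> pairs" "x \<in> SS p" "y \<in> SS p" using cover[OF x y] by blast
    have "psi p x = psi p y" using eq ff_eq[OF p(1,2)] ff_eq[OF p(1,3)] by simp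
    then show "x = y" by (rule inj_onD[OF bij_betw_imp_inj_on[OF iso_bij[OF SS'_props(4)[OF p(1)]]] _ p(2,3)])
  qed
  have img: "ff ` V \<subseteq> V"
  proof
    fix z assume "z \<in> ff ` V"
    then obtain x where x: "x \<in> V" "z = ff x" by blast
    obtain p where p: "p \<in> pairs" "x \<in> SS p" using cover[OF x(1) x(1)] by blast
    have "psi p x \<in> SS' p" using iso_img[OF SS'_props(4)[OF p(1)]] p(2) by blast
    then show "z \<in> V" using x(2) ff_eq[OF p] SS'_props(1)[OF p(1)] by auto
  qed
  have "ff ` V = V" by (rule endo_inj_surj[OF finite_atLeastLessThan img inj])
  then have bij: "bij_betw ff V V" using inj bij_betw_def by blast
  have "{x, y} \<in> E \<longleftrightarrow> {ff x, ff y} \<in> E'" if x: "x \<in> V" and y: "y \<in> V" for x y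
  proof -
    obtain p where p: "p \<in> pairs" "x \<in> SS p" "y \<in> SS p" using cover[OF x y] by blast
    show ?thesis using iso_edge[OF SS'_props(4)[OF p(1)] p(2,3)] ff_eq[OF p(1,2)] ff_eq[OF p(1,3)] by simp
  qed
  then show ?thesis unfolding graph_iso_def using bij by blast
qed

end

lemma all_pairs_finite: "finite (all_pairs n)"
  unfolding all_pairs_def by (rule finite_subset[of _ "Pow {0..<n}"]) auto

lemma card_labeled: "card (labeled_graphs n) = 2 ^ card (all_pairs n)"
  unfolding labeled_graphs_def by (rule card_Pow[OF all_pairs_finite])

lemma A_bound:
  fixes \<sigma> :: "nat \<Rightarrow> nat" and n k :: nat
  assumes kn: "k \<le> n" and k2: "2 \<le> k" and \<sigma>V: "\<And>x. x < k \<Longrightarrow> \<sigma> x < n" and inj: "inj_on \<sigma> {0..<k}"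
  shows "real (card {E\<in>labeled_graphs n. \<forall>x\<in>{0..<k}. \<forall>y\<in>{0..<k}. {x, y} \<in> E \<longleftrightarrow> {\<sigma> x, \<sigma> y} \<in> E})
     \<le> 2 ^ card (all_pairs n) * (\<Prod>x\<in>{0..<k}. (2 powr (-(real k - 2) / 4)) ^
            (if \<sigma> x = x then 0 else if \<sigma> x < k then 1 else 2))"
proof -
  define B where "B = {0..<k}"
  define U where "U = all_pairs n"
  define P where "P = all_pairs k"
  define A where "A = {E\<in>labeled_graphs n. \<forall>x\<in>B. \<forall>y\<in>B. {x, y} \<in> E \<longleftrightarrow> {\<sigma> x, \<sigma> y} \<in> E}"
  define \<pi> where "\<pi> p = \<sigma> ` p" for p :: "nat set"
  have fU: "finite U" unfolding U_def by (rule all_pairs_finite)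
  have "\<exists>(g::nat set \<Rightarrow> nat) Nn. g ` U = {i. i < Nn} \<and> inj_on g U" by (rule finite_imp_inj_to_nat_seg[OF fU])
  then obtain g Nn where gg: "g ` U = {i::nat. i < Nn} \<and> inj_on g U" by blast
  then have ginj: "inj_on g U" and gimg: "g ` U = {i. i < Nn}" by simp_all
  have glt: "g q < Nn" if "q \<in> U" for q
  proof -
    have "g q \<in> g ` U" using that by (rule imageI)
    then show ?thesis using gimg by simp
  qed
  define rk where "rk q = (if q \<subseteq> B then 0 else Nn) + g q" for q
  have rk_inj: "q1 = q2" if "q1 \<in> U" "q2 \<in> U" "rk q1 = rk q2" for q1 q2
  proof -
    have "g q1 = g q2"
      using that glt[OF that(1)] glt[OF that(2)] unfolding rk_def by (auto split: if_splits)
    then show ?thesis using inj_onD[OF ginj _ that(1,2)] by blast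
  qed
  have PU: "P \<subseteq> U"
  proof
    fix e assume "e \<in> P"
    then have "e \<subseteq> {0..<k}" "card e = 2" unfolding P_def all_pairs_def by simp_all
    then show "e \<in> U" using kn unfolding U_def all_pairs_def by auto
  qed
  have PB: "p \<subseteq> B" if "p \<in> P" for p using that unfolding P_def all_pairs_def B_def by auto
  have Pxy: "\<exists>x y. x \<in> B \<and> y \<in> B \<and> x \<noteq> y \<and> p = {x, y}" if "p \<in> P" for p
  proof -
    have "card p = 2" using that unfolding P_def all_pairs_def by simp
    then have "\<exists>x y. p = {x, y} \<and> x \<noteq> y" by (simp add: card_2_iff)
    then obtain x y where "p = {x, y}" "x \<noteq> y" by blast
    then show ?thesis using PB[OF that] by blast
  qed
  have piP: "\<pi> {x, y} = {\<sigma> x, \<sigma> y}" for x y unfolding \<pi>_def by simp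
  have piU: "\<pi> p \<in> U" if pP: "p \<in> P" for p
  proof -
    obtain x y where xy: "x \<in> B" "y \<in> B" "x \<noteq> y" "p = {x, y}" using Pxy[OF pP] by blast
    have "x \<in> {0..<k}" "y \<in> {0..<k}" using xy unfolding B_def by auto
    then have "\<sigma> x \<noteq> \<sigma> y" using inj_onD[OF inj] xy(3) by blast
    moreover have "\<sigma> x < n" "\<sigma> y < n" using \<sigma>V xy(1,2) unfolding B_def by auto
    ultimately show ?thesis unfolding U_def all_pairs_def using xy(4) piP by auto
  qed
  have pi_inj: "inj_on \<pi> P"
  proof (rule inj_onI)
    fix p q assume p: "p \<in> P" and q: "q \<in> P" and e: "\<pi> p = \<pi> q"
    have "inj_on \<sigma> B" using inj B_def by simp
    then show "p = q" using inj_on_image_eq_iff[of \<sigma> B p q] PB[OF p] PB[OF q] e unfolding \<pi>_def by blast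
  qed
  have edge: "p \<in> E \<longleftrightarrow> \<pi> p \<in> E" if EA: "E \<in> A" and pP: "p \<in> P" for E p
  proof -
    obtain x y where xy: "x \<in> B" "y \<in> B" "p = {x, y}" using Pxy[OF pP] by blast
    show ?thesis using EA xy piP unfolding A_def by simp
  qed
  define D' where "D' = {p\<in>P. \<pi> p \<noteq> p}"
  define Desc where "Desc = {p\<in>P. \<not> \<pi> p \<subseteq> B}"
  define d where "d p = (if rk p < rk (\<pi> p) then \<pi> p else p)" for p
  define Q where "Q = d ` D'"
  have fP: "finite P" using fU PU finite_subset by blast
  have QU: "Q \<subseteq> U"
  proof
    fix q assume "q \<in> Q"
    then obtain p where p: "p \<in> D'" "q = d p" unfolding Q_def by blast
    have "p \<in> P" using p(1) unfolding D'_def by simp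
    then show "q \<in> U" using p(2) piU PU unfolding d_def by (auto split: if_splits)
  qed
  have AU: "A \<subseteq> Pow U" unfolding A_def U_def labeled_graphs_def by blast
  have det: "\<exists>z. rk z < rk q \<and> (\<forall>E\<in>A. q \<in> E \<longleftrightarrow> z \<in> E)" if qQ: "q \<in> Q" for q
  proof -
    obtain p where p: "p \<in> D'" "q = d p" using qQ unfolding Q_def by blast
    have pP: "p \<in> P" and ne: "\<pi> p \<noteq> p" using p(1) unfolding D'_def by auto
    show ?thesis
    proof (cases "rk p < rk (\<pi> p)")
      case True
      then have "q = \<pi> p" using p(2) unfolding d_def by simp
      then show ?thesis using True edge[OF _ pP] by metis
    next
      case False
      then have q: "q = p" using p(2) unfolding d_def by simp
      have "rk (\<pi> p) \<noteq> rk p" using rk_inj[OF piU[OF pP] PU[THEN subsetD, OF pP]] ne by blast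
      then have "rk (\<pi> p) < rk q" using False q by simp
      then show ?thesis using q edge[OF _ pP] by metis
    qed
  qed
  have cA: "card A \<le> 2 ^ (card U - card Q)" by (rule count_det[OF fU QU AU det])
  define D1 where "D1 = {p\<in>D'. rk p < rk (\<pi> p)}"
  define D2 where "D2 = D' - D1"
  have fD': "finite D'" using fP unfolding D'_def by simp
  have D'split: "card D' = card D1 + card D2"
    unfolding D2_def using card_Diff_subset[of D1 D'] card_mono[of D' D1] fD' unfolding D1_def
    by (metis (no_types, lifting) add_diff_inverse_nat finite_subset mem_Collect_eq not_le subsetI)
  have cD1: "card D1 \<le> card Q"
  proof -
    have "card D1 = card (\<pi> ` D1)"
      using card_image[OF inj_on_subset[OF pi_inj]] unfolding D1_def D'_def by (metis (no_types, lifting) mem_Collect_eq subsetI)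
    also have "\<pi> ` D1 \<subseteq> Q" unfolding Q_def D1_def d_def by auto
    then have "card (\<pi> ` D1) \<le> card Q" using card_mono finite_subset[OF QU fU] by blast
    finally show ?thesis .
  qed
  have DescD1: "Desc \<subseteq> D1"
  proof
    fix p assume p: "p \<in> Desc"
    then have pP: "p \<in> P" and nB: "\<not> \<pi> p \<subseteq> B" unfolding Desc_def by auto
    have "\<pi> p \<noteq> p" using nB PB[OF pP] by blast
    moreover have "rk p < rk (\<pi> p)" using PB[OF pP] nB glt[OF PU[THEN subsetD, OF pP]] unfolding rk_def by simp
    ultimately show "p \<in> D1" unfolding D1_def D'_def using pP by simp
  qed
  have cDesc: "card Desc + card D2 \<le> card Q"
  proof -
    have fDesc: "finite Desc" using fP unfolding Desc_def by simp
    have fD2: "finite D2" using fD' unfolding D2_def by simp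
    have disj: "\<pi> ` Desc \<inter> D2 = {}"
    proof -
      have "\<not> \<pi> p \<subseteq> B" if "p \<in> Desc" for p using that unfolding Desc_def by simp
      moreover have "p \<subseteq> B" if "p \<in> D2" for p using that PB unfolding D2_def D'_def by simp
      ultimately show ?thesis by blast
    qed
    have "card Desc = card (\<pi> ` Desc)"
      using card_image[OF inj_on_subset[OF pi_inj]] unfolding Desc_def by (metis (no_types, lifting) mem_Collect_eq subsetI)
    then have "card Desc + card D2 = card (\<pi> ` Desc \<union> D2)"
      using card_Un_disjoint[OF finite_imageI[OF fDesc] fD2 disj] by simp
    also have "\<pi> ` Desc \<union> D2 \<subseteq> Q"
    proof
      fix q assume "q \<in> \<pi> ` Desc \<union> D2"
      then show "q \<in> Q"
      proof
        assume "q \<in> \<pi> ` Desc"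
        then obtain p where "p \<in> Desc" "q = \<pi> p" by blast
        then have "p \<in> D1" "q = \<pi> p" using DescD1 by blast+
        then have "p \<in> D'" "d p = q" unfolding D1_def d_def by auto
        then show "q \<in> Q" unfolding Q_def by blast
      next
        assume "q \<in> D2"
        then have "q \<in> D'" "d q = q" unfolding D2_def D1_def d_def by auto
        then show "q \<in> Q" unfolding Q_def by (metis imageI)
      qed
    qed
    then have "card (\<pi> ` Desc \<union> D2) \<le> card Q" using card_mono finite_subset[OF QU fU] by blast
    finally show ?thesis .
  qed
  have cQ: "card D' + card Desc \<le> 2 * card Q" using D'split cD1 cDesc by simp
  define M where "M = {x\<in>B. \<sigma> x \<noteq> x}"
  define Es where "Es = {x\<in>B. \<sigma> x \<notin> B}"
  have fB: "finite B" unfolding B_def by simp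
  have P2: "card p = 2" if "p \<in> P" for p using that unfolding P_def all_pairs_def by simp
  have lbM: "card M * (k - 2) \<le> 2 * card D'"
  proof (rule double_count[OF fD' _ _ ])
    show "finite M" using fB unfolding M_def by simp
    show "card p = 2" if "p \<in> D'" for p using that P2 unfolding D'_def by simp
    fix x assume x: "x \<in> M"
    then have xB: "x \<in> B" and sx: "\<sigma> x \<noteq> x" unfolding M_def by auto
    have "(\<lambda>y. {x, y}) ` (B - {x, \<sigma> x}) \<subseteq> {p\<in>D'. x \<in> p}"
    proof
      fix p assume "p \<in> (\<lambda>y. {x, y}) ` (B - {x, \<sigma> x})"
      then obtain y where y: "y \<in> B" "y \<noteq> x" "y \<noteq> \<sigma> x" "p = {x, y}" by blast
      have "p \<in> P" using y xB unfolding P_def all_pairs_def B_def by auto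
      moreover have "\<pi> p \<noteq> p" using y sx piP by auto
      ultimately show "p \<in> {p\<in>D'. x \<in> p}" unfolding D'_def using y by simp
    qed
    moreover have "inj_on (\<lambda>y. {x, y}) (B - {x, \<sigma> x})" by (rule inj_onI) (auto simp: doubleton_eq_iff)
    ultimately have "card (B - {x, \<sigma> x}) \<le> card {p\<in>D'. x \<in> p}"
      using card_inj_on_le[of "\<lambda>y. {x, y}"] fD' by (metis (no_types, lifting) finite_subset mem_Collect_eq subsetI)
    moreover have "k - 2 \<le> card (B - {x, \<sigma> x})"
    proof -
      have "card B - card {x, \<sigma> x} \<le> card (B - {x, \<sigma> x})" by (rule diff_card_le_card_Diff) simp
      moreover have "card {x, \<sigma> x} \<le> 2" by (simp add: card_insert_le_m1)
      ultimately show ?thesis unfolding B_def by simp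
    qed
    ultimately show "k - 2 \<le> card {p\<in>D'. x \<in> p}" by simp
  qed
  have fDesc: "finite Desc" using fP unfolding Desc_def by simp
  have lbE: "card Es * (k - 1) \<le> 2 * card Desc"
  proof (rule double_count[OF fDesc _ _ ])
    show "finite Es" using fB unfolding Es_def by simp
    show "card p = 2" if "p \<in> Desc" for p using that P2 unfolding Desc_def by simp
    fix x assume x: "x \<in> Es"
    then have xB: "x \<in> B" and sx: "\<sigma> x \<notin> B" unfolding Es_def by auto
    have "(\<lambda>y. {x, y}) ` (B - {x}) \<subseteq> {p\<in>Desc. x \<in> p}"
    proof
      fix p assume "p \<in> (\<lambda>y. {x, y}) ` (B - {x})"
      then obtain y where y: "y \<in> B" "y \<noteq> x" "p = {x, y}" by blast
      have "p \<in> P" using y xB unfolding P_def all_pairs_def B_def by auto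
      moreover have "\<not> \<pi> p \<subseteq> B" using y sx piP by auto
      ultimately show "p \<in> {p\<in>Desc. x \<in> p}" unfolding Desc_def using y by simp
    qed
    moreover have "inj_on (\<lambda>y. {x, y}) (B - {x})" by (rule inj_onI) (auto simp: doubleton_eq_iff)
    ultimately have "card (B - {x}) \<le> card {p\<in>Desc. x \<in> p}"
      using card_inj_on_le[of "\<lambda>y. {x, y}"] fDesc by (metis (no_types, lifting) finite_subset mem_Collect_eq subsetI)
    moreover have "card (B - {x}) = k - 1" using xB unfolding B_def by simp
    ultimately show "k - 1 \<le> card {p\<in>Desc. x \<in> p}" by simp
  qed
  have main: "(card M + card Es) * (k - 2) \<le> 4 * card Q"
  proof -
    have "card Es * (k - 2) \<le> card Es * (k - 1)" by (intro mult_le_mono2) simp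
    moreover have "(card M + card Es) * (k - 2) = card M * (k - 2) + card Es * (k - 2)" by (rule add_mult_distrib)
    ultimately show ?thesis using lbM lbE cQ by linarith
  qed
  define a where "a = (2::real) powr (-(real k - 2) / 4)"
  define c where "c x = (if \<sigma> x = x then 0 else if \<sigma> x < k then 1 else 2::nat)" for x
  have csum: "(\<Sum>x\<in>B. c x) = card M + card Es"
  proof -
    have "c x = of_bool (x \<in> M) + of_bool (x \<in> Es)" if "x \<in> B" for x
      using that unfolding c_def M_def Es_def B_def by auto
    then have "(\<Sum>x\<in>B. c x) = (\<Sum>x\<in>B. of_bool (x \<in> M)) + (\<Sum>x\<in>B. of_bool (x \<in> Es))"
      by (simp add: sum.distrib)
    also have "\<dots> = card M + card Es" using fB unfolding M_def Es_def by (simp add: Int_def)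
    finally show ?thesis .
  qed
  have prodeq: "(\<Prod>x\<in>B. a ^ c x) = a ^ (card M + card Es)"
    using csum by (simp add: power_sum[symmetric])
  have apow: "a ^ j = 2 powr (- (real k - 2) / 4 * real j)" for j
    unfolding a_def by (simp add: powr_power mult.commute)
  have cQU: "card Q \<le> card U" using card_mono[OF fU QU] .
  have "real (card A) \<le> 2 ^ (card U - card Q)" using cA by (metis of_nat_le_iff of_nat_numeral of_nat_power)
  also have "(2::real) ^ (card U - card Q) = 2 ^ card U / 2 ^ card Q" using cQU by (simp add: power_diff)
  also have "\<dots> \<le> 2 ^ card U * a ^ (card M + card Es)"
  proof -
    have "(real k - 2) * real (card M + card Es) \<le> 4 * real (card Q)"
    proof -
      have "real ((card M + card Es) * (k - 2)) \<le> real (4 * card Q)" using main by linarith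
      then show ?thesis using k2 by (simp add: of_nat_diff mult.commute)
    qed
    moreover have "- (real k - 2) / 4 * real (card M + card Es) = - ((real k - 2) * real (card M + card Es)) / 4"
      by (simp add: algebra_simps)
    ultimately have "- (real k - 2) / 4 * real (card M + card Es) \<ge> - real (card Q)" by linarith
    then have "2 powr (- (real k - 2) / 4 * real (card M + card Es)) \<ge> 2 powr (- real (card Q))" by simp
    moreover have "2 powr (- real (card Q)) = 1 / 2 ^ card Q" by (simp add: powr_minus powr_realpow divide_inverse)
    ultimately have "1 / 2 ^ card Q \<le> a ^ (card M + card Es)" using apow by simp
    then show ?thesis by (simp add: divide_inverse mult_left_mono)
  qed
  finally show ?thesis using prodeq unfolding A_def B_def c_def a_def U_def by simp
qed

definition rigid :: "nat \<Rightarrow> nat \<Rightarrow> nat set set \<Rightarrow> bool" where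
  "rigid n k E \<longleftrightarrow> (\<forall>\<sigma>. (\<forall>x\<in>{0..<k}. \<sigma> x \<in> {0..<n}) \<longrightarrow> inj_on \<sigma> {0..<k} \<longrightarrow>
      (\<forall>x\<in>{0..<k}. \<forall>y\<in>{0..<k}. {x, y} \<in> E \<longleftrightarrow> {\<sigma> x, \<sigma> y} \<in> E) \<longrightarrow> (\<forall>x\<in>{0..<k}. \<sigma> x = x))"

definition distnb :: "nat \<Rightarrow> nat \<Rightarrow> nat set set \<Rightarrow> bool" where
  "distnb n k E \<longleftrightarrow> (\<forall>u\<in>{k..<n}. \<forall>v\<in>{k..<n}. u \<noteq> v \<longrightarrow> (\<exists>b<k. ({u, b} \<in> E) \<noteq> ({v, b} \<in> E)))"

theorem det_main:
  assumes E: "E \<in> labeled_graphs n" and kn: "k + 2 \<le> n" and r: "rigid n k E" and dn: "distnb n k E"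
  shows "determined_by_deck n (k + 2) E"
  unfolding determined_by_deck_def
proof (intro ballI impI)
  fix E' assume E': "E' \<in> labeled_graphs n"
    and deck: "\<forall>EF\<in>labeled_graphs (k + 2). ind_count n E' (k + 2) EF = ind_count n E (k + 2) EF"
  have "det n k E E'"
  proof
    show "E \<subseteq> all_pairs n" using E unfolding labeled_graphs_def by simp
    show "E' \<subseteq> all_pairs n" using E' unfolding labeled_graphs_def by simp
    show "k + 2 \<le> n" by (rule kn)
    show "\<sigma> x = x" if "\<forall>x\<in>{0..<k}. \<sigma> x \<in> {0..<n}" "inj_on \<sigma> {0..<k}"
      "\<forall>x\<in>{0..<k}. \<forall>y\<in>{0..<k}. ({x, y} \<in> E) = ({\<sigma> x, \<sigma> y} \<in> E)" "x \<in> {0..<k}" for \<sigma> x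
      using r that unfolding rigid_def by blast
    show "\<exists>b<k. ({u, b} \<in> E) \<noteq> ({v, b} \<in> E)" if "u \<in> {k..<n}" "v \<in> {k..<n}" "u \<noteq> v" for u v
      using dn that unfolding distnb_def by blast
    show "\<forall>EF\<in>labeled_graphs (k + 2). ind_count n E' (k + 2) EF = ind_count n E (k + 2) EF" by (rule deck)
  qed
  then show "graph_iso {0..<n} E {0..<n} E'" by (rule det.iso_result)
qed

lemma sum_weight:
  fixes a :: real
  assumes a: "a \<ge> 0" and kn: "k \<le> n" and x: "x < k"
  shows "(\<Sum>y\<in>{0..<n}. a ^ (if y = x then 0 else if y < k then 1 else 2)) \<le> 1 + real k * a + real n * a^2"
proof -
  have "(\<Sum>y\<in>{0..<n}. a ^ (if y = x then 0 else if y < k then 1 else 2::nat))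
      \<le> (\<Sum>y\<in>{0..<n}. of_bool (y = x) + of_bool (y < k) * a + a^2)"
    by (rule sum_mono) (use a in auto)
  also have "\<dots> = (\<Sum>y\<in>{0..<n}. of_bool (y = x)) + (\<Sum>y\<in>{0..<n}. of_bool (y < k)) * a + real n * a^2"
    by (simp add: sum.distrib sum_distrib_right)
  also have "(\<Sum>y\<in>{0..<n}. of_bool (y = x) :: real) = 1"
  proof -
    have "{0..<n} \<inter> {y. y = x} = {x}" using x kn by auto
    then show ?thesis by simp
  qed
  also have "(\<Sum>y\<in>{0..<n}. of_bool (y < k) :: real) = real k"
  proof -
    have "{0..<n} \<inter> {y. y < k} = {0..<k}" using kn by auto
    then show ?thesis by simp
  qed
  finally show ?thesis by simp
qed

lemma bad_rigid:
  assumes kn: "k \<le> n" and k2: "2 \<le> k"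
  shows "real (card {E\<in>labeled_graphs n. \<not> rigid n k E})
    \<le> 2 ^ card (all_pairs n) * ((1 + real k * (2 powr (-(real k - 2) / 4)) + real n * (2 powr (-(real k - 2) / 4))^2) ^ k - 1)"
proof -
  define a where "a = (2::real) powr (-(real k - 2) / 4)"
  define N where "N = card (all_pairs n)"
  define B where "B = {0..<k}"
  define V where "V = {0..<n}"
  define PI where "PI = PiE B (\<lambda>_. V)"
  define id0 where "id0 = restrict (\<lambda>x. x) B"
  define Sg where "Sg = {\<tau>\<in>PI - {id0}. inj_on \<tau> B}"
  define A where "A \<tau> = {E\<in>labeled_graphs n. \<forall>x\<in>{0..<k}. \<forall>y\<in>{0..<k}. {x, y} \<in> E \<longleftrightarrow> {\<tau> x, \<tau> y} \<in> E}" for \<tau>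
  define cc where "cc x y = (if y = x then 0 else if y < k then 1 else 2::nat)" for x y :: nat
  define w where "w \<tau> = (\<Prod>x\<in>B. a ^ cc x (\<tau> x))" for \<tau>
  have a0: "a \<ge> 0" unfolding a_def by simp
  have fPI: "finite PI" unfolding PI_def B_def V_def by (rule finite_PiE) auto
  have fSg: "finite Sg" using fPI unfolding Sg_def by simp
  have sub: "{E\<in>labeled_graphs n. \<not> rigid n k E} \<subseteq> (\<Union>\<tau>\<in>Sg. A \<tau>)"
  proof
    fix E assume "E \<in> {E\<in>labeled_graphs n. \<not> rigid n k E}"
    then have EL: "E \<in> labeled_graphs n" and nr: "\<not> rigid n k E" by auto
    then obtain \<sigma> where sV: "\<forall>x\<in>{0..<k}. \<sigma> x \<in> {0..<n}" and si: "inj_on \<sigma> {0..<k}"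
      and se: "\<forall>x\<in>{0..<k}. \<forall>y\<in>{0..<k}. {x, y} \<in> E \<longleftrightarrow> {\<sigma> x, \<sigma> y} \<in> E"
      and sx: "\<exists>x\<in>{0..<k}. \<sigma> x \<noteq> x"
      unfolding rigid_def by blast
    define \<tau> where "\<tau> = restrict \<sigma> B"
    have t1: "\<tau> \<in> PI" unfolding \<tau>_def PI_def using sV unfolding B_def V_def by auto
    have t2: "\<tau> \<noteq> id0"
    proof
      assume e: "\<tau> = id0"
      from sx obtain x where x: "x < k" "\<sigma> x \<noteq> x" by auto
      have "\<tau> x = id0 x" using e by simp
      then show False using x unfolding \<tau>_def id0_def B_def by simp
    qed
    have t3: "inj_on \<tau> B" unfolding \<tau>_def B_def using si by (simp add: inj_on_restrict_eq)
    have "E \<in> A \<tau>" unfolding A_def \<tau>_def B_def using EL se by simp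
    moreover have "\<tau> \<in> Sg" unfolding Sg_def using t1 t2 t3 by simp
    ultimately show "E \<in> (\<Union>\<tau>\<in>Sg. A \<tau>)" by blast
  qed
  have "card {E\<in>labeled_graphs n. \<not> rigid n k E} \<le> card (\<Union>\<tau>\<in>Sg. A \<tau>)"
  proof (rule card_mono[OF _ sub])
    show "finite (\<Union>\<tau>\<in>Sg. A \<tau>)"
      by (rule finite_subset[of _ "labeled_graphs n"]) (auto simp: A_def labeled_graphs_def all_pairs_finite)
  qed
  also have "\<dots> \<le> (\<Sum>\<tau>\<in>Sg. card (A \<tau>))" by (rule card_UN_le[OF fSg])
  finally have c1: "real (card {E\<in>labeled_graphs n. \<not> rigid n k E}) \<le> (\<Sum>\<tau>\<in>Sg. real (card (A \<tau>)))"
    by (metis of_nat_le_iff of_nat_sum)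
  also have "\<dots> \<le> (\<Sum>\<tau>\<in>Sg. 2 ^ N * w \<tau>)"
  proof (rule sum_mono)
    fix \<tau> assume t: "\<tau> \<in> Sg"
    then have tPI: "\<tau> \<in> PI" and ti: "inj_on \<tau> {0..<k}" unfolding Sg_def B_def by auto
    have tV: "\<tau> x < n" if "x < k" for x using tPI that unfolding PI_def B_def V_def by auto
    show "real (card (A \<tau>)) \<le> 2 ^ N * w \<tau>"
      using A_bound[OF kn k2 tV ti] unfolding A_def N_def w_def cc_def a_def B_def by simp
  qed
  also have "\<dots> \<le> (\<Sum>\<tau>\<in>PI - {id0}. 2 ^ N * w \<tau>)"
  proof (rule sum_mono2)
    show "finite (PI - {id0})" using fPI by simp
    show "Sg \<subseteq> PI - {id0}" unfolding Sg_def by blast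
    show "0 \<le> 2 ^ N * w \<tau>" for \<tau> unfolding w_def using a0 by (simp add: prod_nonneg)
  qed
  also have "\<dots> = 2 ^ N * ((\<Sum>\<tau>\<in>PI. w \<tau>) - w id0)"
  proof -
    have "id0 \<in> PI" unfolding id0_def PI_def B_def V_def using kn by auto
    then have "(\<Sum>\<tau>\<in>PI - {id0}. w \<tau>) = (\<Sum>\<tau>\<in>PI. w \<tau>) - w id0" using fPI by (simp add: sum_diff1)
    moreover have "(\<Sum>\<tau>\<in>PI - {id0}. 2 ^ N * w \<tau>) = 2 ^ N * (\<Sum>\<tau>\<in>PI - {id0}. w \<tau>)"
      by (rule sum_distrib_left[symmetric])
    ultimately show ?thesis by simp
  qed
  also have "w id0 = 1" unfolding w_def id0_def cc_def by simp
  also have "(\<Sum>\<tau>\<in>PI. w \<tau>) = (\<Prod>x\<in>B. \<Sum>y\<in>V. a ^ cc x y)"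
    unfolding w_def PI_def by (rule prod_sum_PiE[symmetric]) (auto simp: B_def V_def)
  also have "\<dots> \<le> (\<Prod>x\<in>B. 1 + real k * a + real n * a^2)"
  proof (rule prod_mono)
    fix x assume "x \<in> B"
    then have "x < k" unfolding B_def by simp
    then show "0 \<le> (\<Sum>y\<in>V. a ^ cc x y) \<and> (\<Sum>y\<in>V. a ^ cc x y) \<le> 1 + real k * a + real n * a\<^sup>2"
      using sum_weight[OF a0 kn] a0 unfolding V_def cc_def by (auto intro: sum_nonneg)
  qed
  also have "\<dots> = (1 + real k * a + real n * a^2) ^ k" unfolding B_def by simp
  finally show ?thesis unfolding a_def N_def by (simp add: mult_left_mono)
qed

lemma bad_dist:
  assumes kn: "k \<le> n"
  shows "real (card {E\<in>labeled_graphs n. \<not> distnb n k E}) \<le> real n ^ 2 * 2 ^ card (all_pairs n) / 2 ^ k"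
proof -
  define U where "U = all_pairs n"
  define N where "N = card U"
  define W where "W = {k..<n}"
  define A where "A uv = {E\<in>labeled_graphs n. fst uv \<noteq> snd uv \<and> (\<forall>b<k. {fst uv, b} \<in> E \<longleftrightarrow> {snd uv, b} \<in> E)}" for uv
  have fU: "finite U" unfolding U_def by (rule all_pairs_finite)
  have cA: "real (card (A uv)) \<le> 2 ^ N / 2 ^ k" if uv: "uv \<in> W \<times> W" for uv
  proof (cases "fst uv = snd uv")
    case True
    then have "A uv = {}" unfolding A_def by simp
    then show ?thesis by simp
  next
    case False
    define u where "u = fst uv"
    define v where "v = snd uv"
    have uW: "k \<le> u" "u < n" and vW: "k \<le> v" "v < n" using uv unfolding u_def v_def W_def by auto
    have uv': "u \<noteq> v" using False unfolding u_def v_def by simp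
    define Q where "Q = (\<lambda>b. {v, b}) ` {0..<k}"
    have QU: "Q \<subseteq> U"
    proof
      fix q assume "q \<in> Q"
      then obtain b where b: "b < k" "q = {v, b}" unfolding Q_def by auto
      then have "v \<noteq> b" using vW by simp
      then show "q \<in> U" unfolding U_def all_pairs_def using b vW kn by auto
    qed
    have cQ: "card Q = k"
    proof -
      have "inj_on (\<lambda>b. {v, b}) {0..<k}"
      proof (rule inj_onI)
        fix b1 b2 assume "b1 \<in> {0..<k}" "b2 \<in> {0..<k}" "{v, b1} = {v, b2}"
        then show "b1 = b2" using vW by (auto simp: doubleton_eq_iff)
      qed
      then show ?thesis unfolding Q_def by (simp add: card_image)
    qed
    have AU: "A uv \<subseteq> Pow U" unfolding A_def U_def labeled_graphs_def by blast
    define f where "f q = (if q \<in> Q then 1 else 0::nat)" for q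
    have det: "\<exists>z. f z < f q \<and> (\<forall>E\<in>A uv. q \<in> E \<longleftrightarrow> z \<in> E)" if qQ: "q \<in> Q" for q
    proof -
      obtain b where b: "b < k" "q = {v, b}" using qQ unfolding Q_def by auto
      have "{u, b} \<notin> Q"
      proof
        assume "{u, b} \<in> Q"
        then obtain b' where "b' < k" "{u, b} = {v, b'}" unfolding Q_def by auto
        then show False using uv' uW by (auto simp: doubleton_eq_iff)
      qed
      then have "f {u, b} < f q" unfolding f_def using qQ by simp
      moreover have "\<forall>E\<in>A uv. q \<in> E \<longleftrightarrow> {u, b} \<in> E" using b unfolding A_def by (auto simp: u_def v_def)
      ultimately show ?thesis by blast
    qed
    have "card (A uv) \<le> 2 ^ (card U - card Q)" by (rule count_det[OF fU QU AU det])
    then have "real (card (A uv)) \<le> 2 ^ (card U - card Q)" by (metis of_nat_le_iff of_nat_numeral of_nat_power)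
    also have "(2::real) ^ (card U - card Q) = 2 ^ card U / 2 ^ card Q"
      using card_mono[OF fU QU] by (simp add: power_diff)
    finally show ?thesis unfolding N_def using cQ by simp
  qed
  have sub: "{E\<in>labeled_graphs n. \<not> distnb n k E} \<subseteq> (\<Union>uv\<in>W \<times> W. A uv)"
  proof
    fix E assume "E \<in> {E\<in>labeled_graphs n. \<not> distnb n k E}"
    then have EL: "E \<in> labeled_graphs n" and nd: "\<not> distnb n k E" by auto
    then obtain u v where "u \<in> W" "v \<in> W" "u \<noteq> v" "\<forall>b<k. ({u, b} \<in> E) = ({v, b} \<in> E)"
      unfolding distnb_def W_def by blast
    then have "E \<in> A (u, v)" "(u, v) \<in> W \<times> W" unfolding A_def using EL by auto
    then show "E \<in> (\<Union>uv\<in>W \<times> W. A uv)" by blast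
  qed
  have fW: "finite (W \<times> W)" unfolding W_def by simp
  have "card {E\<in>labeled_graphs n. \<not> distnb n k E} \<le> card (\<Union>uv\<in>W \<times> W. A uv)"
  proof (rule card_mono[OF _ sub])
    show "finite (\<Union>uv\<in>W \<times> W. A uv)"
      by (rule finite_subset[of _ "labeled_graphs n"]) (auto simp: A_def labeled_graphs_def all_pairs_finite)
  qed
  also have "\<dots> \<le> (\<Sum>uv\<in>W \<times> W. card (A uv))" by (rule card_UN_le[OF fW])
  finally have "real (card {E\<in>labeled_graphs n. \<not> distnb n k E}) \<le> (\<Sum>uv\<in>W \<times> W. real (card (A uv)))"
    by (metis of_nat_le_iff of_nat_sum)
  also have "\<dots> \<le> (\<Sum>uv\<in>W \<times> W. 2 ^ N / 2 ^ k)" by (rule sum_mono) (rule cA)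
  also have "\<dots> = real (card (W \<times> W)) * (2 ^ N / 2 ^ k)" by simp
  also have "\<dots> \<le> real n ^ 2 * (2 ^ N / 2 ^ k)"
  proof (rule mult_right_mono)
    have "card (W \<times> W) = (n - k) * (n - k)" unfolding W_def by (simp add: card_cartesian_product)
    also have "\<dots> \<le> n * n" by (simp add: mult_le_mono)
    finally show "real (card (W \<times> W)) \<le> real n ^ 2" by (simp add: power2_eq_square) (metis of_nat_le_iff of_nat_mult)
  qed simp
  finally show ?thesis unfolding N_def U_def by simp
qed

lemma ev1: "eventually (\<lambda>x::real. 3 * log 2 x \<le> x) at_top"
  by real_asymp

lemma ev2: "eventually (\<lambda>x::real. 4 \<le> 3 * log 2 x) at_top"
  by real_asymp

lemma lim1: "((\<lambda>x::real. exp (3 * log 2 x * (3 * log 2 x * (2 powr (5/4) * x powr (-3/4)) + x * (2 powr (5/2) * x powr (-3/2)))) - 1 + 8 / x) \<longlongrightarrow> 0) at_top"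
  by real_asymp

definition "A1 (x::real) = 2 powr (5/4) * x powr (-3/4)"
definition "beta (x::real) = 3 * log 2 x * (3 * log 2 x * A1 x + x * (A1 x)^2)"
definition "delta (x::real) = exp (beta x) - 1 + 8 / x"

lemma delta_lim: "(delta \<longlongrightarrow> 0) at_top"
  unfolding delta_def beta_def A1_def by real_asymp

lemma main_bound:
  fixes n :: nat
  assumes h1: "3 * log 2 (real n) \<le> real n" and h2: "4 \<le> 3 * log 2 (real n)"
  shows "1 - delta (real n) \<le> real (card {E \<in> labeled_graphs n.
                determined_by_deck n (nat \<lfloor>3 * log 2 (real n)\<rfloor>) E}) / real (card (labeled_graphs n))"
proof -
  define L where "L = log 2 (real n)"
  have npos: "real n > 0"
  proof (rule ccontr)
    assume "\<not> real n > 0"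
    then have "n = 0" by simp
    then show False using h2 by (simp add: log_def)
  qed
  define m where "m = nat \<lfloor>3 * L\<rfloor>"
  have m1: "real m \<le> 3 * L" using h2 unfolding m_def L_def by linarith
  have m2: "real m \<ge> 3 * L - 1" using h2 unfolding m_def L_def by linarith
  have m4: "m \<ge> 4" using h2 unfolding m_def L_def by linarith
  have mn: "m \<le> n" using m1 h1 unfolding L_def by linarith
  define k where "k = m - 2"
  have km: "k + 2 = m" using m4 unfolding k_def by simp
  have k2: "2 \<le> k" using m4 unfolding k_def by simp
  have kn: "k \<le> n" using mn km by simp
  have rk: "real k = real m - 2" using km by linarith
  define a where "a = (2::real) powr (-(real k - 2) / 4)"
  define N where "N = card (all_pairs n)"
  define LG where "LG = labeled_graphs n"
  define G where "G = {E\<in>LG. rigid n k E \<and> distnb n k E}"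
  define R where "R = {E\<in>LG. \<not> rigid n k E}"
  define Dn where "Dn = {E\<in>LG. \<not> distnb n k E}"
  define Det where "Det = {E \<in> labeled_graphs n. determined_by_deck n (nat \<lfloor>3 * log 2 (real n)\<rfloor>) E}"
  have fLG: "finite LG" unfolding LG_def labeled_graphs_def using all_pairs_finite by simp
  have cLG: "card LG = 2 ^ N" unfolding LG_def N_def by (rule card_labeled)
  have GD: "G \<subseteq> Det"
  proof
    fix E assume "E \<in> G"
    then have "E \<in> LG" "rigid n k E" "distnb n k E" unfolding G_def by auto
    then have "determined_by_deck n (k + 2) E" using det_main[of E n k] km mn unfolding LG_def by simp
    then show "E \<in> Det" using \<open>E \<in> LG\<close> km unfolding Det_def LG_def m_def L_def by simp
  qed
  have fDet: "finite Det" using fLG unfolding Det_def LG_def by simp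
  have "LG \<subseteq> G \<union> R \<union> Dn" unfolding G_def R_def Dn_def by blast
  then have "card LG \<le> card (G \<union> R \<union> Dn)" by (rule card_mono[rotated]) (use fLG in \<open>auto simp: G_def R_def Dn_def\<close>)
  also have "\<dots> \<le> card G + card R + card Dn" by (metis card_Un_le add_le_mono1 order_trans)
  finally have c1: "real (card LG) \<le> real (card G) + real (card R) + real (card Dn)" by linarith
  have c2: "real (card G) \<le> real (card Det)" using card_mono[OF fDet GD] by simp
  have bR: "real (card R) \<le> 2 ^ N * ((1 + real k * a + real n * a^2) ^ k - 1)"
    using bad_rigid[OF kn k2] unfolding R_def LG_def N_def a_def by simp
  have bD: "real (card Dn) \<le> real n ^ 2 * 2 ^ N / 2 ^ k"
    using bad_dist[OF kn] unfolding Dn_def LG_def N_def by simp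
  have a0: "a \<ge> 0" unfolding a_def by simp
  have p2L: "2 powr L = real n" unfolding L_def using npos by simp
  have aA: "a \<le> A1 (real n)"
  proof -
    have "a \<le> 2 powr ((5 - 3 * L) / 4)" unfolding a_def using rk m2 by (intro powr_mono) auto
    also have "2 powr ((5 - 3 * L) / 4) = 2 powr (5/4) * (2 powr L) powr (-3/4)"
      by (simp add: powr_powr powr_add[symmetric] field_simps)
    also have "\<dots> = A1 (real n)" unfolding A1_def p2L by simp
    finally show ?thesis .
  qed
  have A0: "A1 (real n) \<ge> 0" unfolding A1_def by simp
  define eps where "eps = real k * a + real n * a^2"
  have eps0: "eps \<ge> 0" unfolding eps_def using a0 by simp
  have kL: "real k \<le> 3 * L" using rk m1 by linarith
  have epsb: "eps \<le> 3 * L * A1 (real n) + real n * (A1 (real n))^2"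
  proof -
    have "real k * a \<le> 3 * L * A1 (real n)" using kL aA a0 A0 by (intro mult_mono) auto
    moreover have "real n * a^2 \<le> real n * (A1 (real n))^2" using aA a0 by (intro mult_left_mono power_mono) auto
    ultimately show ?thesis unfolding eps_def by linarith
  qed
  have keps: "real k * eps \<le> beta (real n)"
  proof -
    have "real k * eps \<le> 3 * L * (3 * L * A1 (real n) + real n * (A1 (real n))^2)"
      using kL epsb eps0 by (intro mult_mono) auto
    then show ?thesis unfolding beta_def L_def by simp
  qed
  have powb: "(1 + eps) ^ k \<le> exp (beta (real n))"
  proof -
    have "(1 + eps) ^ k \<le> exp eps ^ k" using eps0 by (intro power_mono) auto
    also have "\<dots> = exp (real k * eps)" by (simp add: exp_of_nat_mult)
    also have "\<dots> \<le> exp (beta (real n))" using keps by simp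
    finally show ?thesis .
  qed
  have twok: "(2::real) ^ k \<ge> real n ^ 3 / 8"
  proof -
    have "(2::real) ^ k = 2 powr (real k)" by (simp add: powr_realpow)
    also have "\<dots> \<ge> 2 powr (3 * L - 3)" using rk m2 by (intro powr_mono) auto
    finally have "(2::real) ^ k \<ge> 2 powr (3 * L - 3)" .
    moreover have "2 powr (3 * L - 3) = (2 powr L) ^ 3 / 8"
    proof -
      have "2 powr (3 * L - 3) = 2 powr (3 * L) / 2 powr 3" by (simp add: powr_diff)
      also have "2 powr (3 * L) = (2 powr L) ^ 3" using powr_power[of "2::real" L 3] by simp
      finally show ?thesis by simp
    qed
    ultimately show ?thesis using p2L by simp
  qed
  have nk: "real n ^ 2 / 2 ^ k \<le> 8 / real n"
  proof -
    have "real n ^ 2 / 2 ^ k \<le> real n ^ 2 / (real n ^ 3 / 8)"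
      using twok npos by (intro divide_left_mono) auto
    also have "\<dots> = 8 / real n" using npos by (simp add: field_simps power2_eq_square power3_eq_cube)
    finally show ?thesis .
  qed
  have N0: "(2::real) ^ N > 0" by simp
  have "real (card Det) \<ge> 2 ^ N - 2 ^ N * ((1 + eps) ^ k - 1) - real n ^ 2 * 2 ^ N / 2 ^ k"
  proof -
    have e: "1 + real k * a + real n * a^2 = 1 + eps" unfolding eps_def by simp
    have bR': "real (card R) \<le> 2 ^ N * ((1 + eps) ^ k - 1)" using bR unfolding e .
    have cLG': "real (card LG) = 2 ^ N" using cLG by simp
    show ?thesis using c1 c2 bR' bD cLG' by linarith
  qed
  then have "real (card Det) / 2 ^ N \<ge> 1 - ((1 + eps) ^ k - 1) - real n ^ 2 / 2 ^ k"
    using N0 by (simp add: field_simps)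
  moreover have "1 - ((1 + eps) ^ k - 1) - real n ^ 2 / 2 ^ k \<ge> 1 - delta (real n)"
    using powb nk unfolding delta_def by simp
  ultimately have "1 - delta (real n) \<le> real (card Det) / 2 ^ N" by linarith
  then show ?thesis unfolding Det_def using cLG unfolding LG_def by simp
qed

theorem theorem1:
  shows "(\<lambda>n. real (card {E \<in> labeled_graphs n.
                determined_by_deck n (nat \<lfloor>3 * log 2 (real n)\<rfloor>) E})
            / real (card (labeled_graphs n))) \<longlonglongrightarrow> 1"
proof (rule tendsto_sandwich[of "\<lambda>n. 1 - delta (real n)" _ _ "\<lambda>n. 1"])
  have "eventually (\<lambda>x::real. 3 * log 2 x \<le> x \<and> 4 \<le> 3 * log 2 x) at_top"
    using ev1 ev2 by (rule eventually_conj)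
  then have "eventually (\<lambda>n. 3 * log 2 (real n) \<le> real n \<and> 4 \<le> 3 * log 2 (real n)) sequentially"
    by (rule eventually_compose_filterlim[OF _ filterlim_real_sequentially])
  then show "eventually (\<lambda>n. 1 - delta (real n) \<le> real (card {E \<in> labeled_graphs n.
                determined_by_deck n (nat \<lfloor>3 * log 2 (real n)\<rfloor>) E})
            / real (card (labeled_graphs n))) sequentially"
    by (rule eventually_mono) (use main_bound in blast)
  show "eventually (\<lambda>n. real (card {E \<in> labeled_graphs n.
                determined_by_deck n (nat \<lfloor>3 * log 2 (real n)\<rfloor>) E})
            / real (card (labeled_graphs n)) \<le> 1) sequentially"
  proof (rule always_eventually, rule allI)
    fix n
    have f: "finite (labeled_graphs n)" unfolding labeled_graphs_def using all_pairs_finite by simp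
    have "card {E \<in> labeled_graphs n. determined_by_deck n (nat \<lfloor>3 * log 2 (real n)\<rfloor>) E} \<le> card (labeled_graphs n)"
      by (rule card_mono[OF f]) blast
    moreover have "card (labeled_graphs n) > 0" using f unfolding labeled_graphs_def by (auto simp: card_gt_0_iff)
    ultimately show "real (card {E \<in> labeled_graphs n.
                determined_by_deck n (nat \<lfloor>3 * log 2 (real n)\<rfloor>) E})
            / real (card (labeled_graphs n)) \<le> 1" by simp
  qed
  have "((\<lambda>n. delta (real n)) \<longlongrightarrow> 0) sequentially"
    by (rule filterlim_compose[OF delta_lim filterlim_real_sequentially])
  then show "(\<lambda>n. 1 - delta (real n)) \<longlonglongrightarrow> 1" using tendsto_diff[OF tendsto_const, of _ 0 sequentially 1] by simp
  show "(\<lambda>n. 1) \<longlonglongrightarrow> (1::real)" by simp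
qed

end
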